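(* Let $\boldsymbol\theta_0,\boldsymbol\theta_1,\dots\in\mathbb{R}^{d\times d}$ be orthogonal and let $Z_0^{\parallel},Z_1^{\parallel},\dots\subseteq\mathbb{R}^d$ be linear subspaces with $\boldsymbol\theta_t Z_t^{\parallel}=Z_{t+1}^{\parallel}$; let $\mathbf{P}_t$ be the orthogonal projection onto $Z_t^{\parallel}$ and let $\alpha_t\in\mathbb{R}$. Define $\mathbf{P}_t^0=\mathbf{P}_t$, $\mathbf{P}_t^{s+1}=\boldsymbol\theta_{t-s-1}^{-1}\mathbf{P}_t^s\boldsymbol\theta_{t-s-1}$ for $0\le s\le t-1$, $\mathbf{G}_t^s=\alpha_t\mathbf{I}+(1-\alpha_t)\mathbf{P}_t^s$, and $\mathbf{F}_t=\mathbf{G}_{t-1}^{t-1}\mathbf{G}_{t-2}^{t-2}\cdots\mathbf{G}_0^0$ for $t\ge1$. Then for all $t\ge1$, $$\mathbf{F}_t=\Big(\prod_{s=0}^{t-1}\alpha_s\Big)\mathbf{I}+\Big(1-\prod_{s=0}^{t-1}\alpha_s\Big)\mathbf{P}_0 .$$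
   Context: $Z_t^{\parallel}$ is the linear embedding subspace of the data at layer $t$ of a network with linear layer maps $\boldsymbol\theta_t$; $\alpha_t$ are control regularization factors. *)

theory Defs
  imports "HOL-Analysis.Analysis"
begin

definition is_orth_proj :: "real^'n^'n \<Rightarrow> (real^'n) set \<Rightarrow> bool" where
  "is_orth_proj P Z \<longleftrightarrow> (\<forall>x. P *v x \<in> Z \<and> (\<forall>z\<in>Z. (x - P *v x) \<bullet> z = 0))"

fun Pconj :: "(nat \<Rightarrow> real^'n^'n) \<Rightarrow> (nat \<Rightarrow> real^'n^'n) \<Rightarrow> nat \<Rightarrow> nat \<Rightarrow> real^'n^'n" where
  "Pconj \<theta> P t 0 = P t"
| "Pconj \<theta> P t (Suc s) = matrix_inv (\<theta> (t - s - 1)) ** Pconj \<theta> P t s ** \<theta> (t - s - 1)"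

definition Gmat :: "(nat \<Rightarrow> real^'n^'n) \<Rightarrow> (nat \<Rightarrow> real^'n^'n) \<Rightarrow> (nat \<Rightarrow> real) \<Rightarrow> nat \<Rightarrow> nat \<Rightarrow> real^'n^'n" where
  "Gmat \<theta> P \<alpha> t s = \<alpha> t *\<^sub>R mat 1 + (1 - \<alpha> t) *\<^sub>R Pconj \<theta> P t s"

fun Fmat :: "(nat \<Rightarrow> real^'n^'n) \<Rightarrow> (nat \<Rightarrow> real^'n^'n) \<Rightarrow> (nat \<Rightarrow> real) \<Rightarrow> nat \<Rightarrow> real^'n^'n" where
  "Fmat \<theta> P \<alpha> 0 = mat 1"
| "Fmat \<theta> P \<alpha> (Suc t) = Gmat \<theta> P \<alpha> t t ** Fmat \<theta> P \<alpha> t"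

end

theory Submission
  imports Defs
begin

lemma orth_inv: "orthogonal_matrix (Q::real^'n^'n) \<Longrightarrow> matrix_inv Q = transpose Q"
proof -
  assume o: "orthogonal_matrix Q"
  let ?B = "matrix_inv Q"
  have ex: "Q ** transpose Q = mat 1 \<and> transpose Q ** Q = mat 1"
    using o by (simp add: orthogonal_matrix_def)
  have "Q ** ?B = mat 1 \<and> ?B ** Q = mat 1"
    unfolding matrix_inv_def by (rule someI[where P="\<lambda>A. Q ** A = mat 1 \<and> A ** Q = mat 1", OF ex])
  then have "?B = (transpose Q ** Q) ** ?B" using ex by simp
  also have "\<dots> = transpose Q" using \<open>Q ** ?B = mat 1 \<and> ?B ** Q = mat 1\<close>
    by (simp add: matrix_mul_assoc[symmetric])
  finally show ?thesis .
qed

lemma tr_inner: "(transpose (Q::real^'n^'n) *v w) \<bullet> y = w \<bullet> (Q *v y)"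
  by (simp add: dot_lmul_matrix)

lemma orth_inner: "orthogonal_matrix (Q::real^'n^'n) \<Longrightarrow> (Q *v x) \<bullet> (Q *v y) = x \<bullet> y"
  by (metis tr_inner matrix_vector_mul_assoc orthogonal_matrix matrix_vector_mul_lid)

lemma orth_back: "orthogonal_matrix (Q::real^'n^'n) \<Longrightarrow> transpose Q *v (Q *v x) = x"
  by (metis matrix_vector_mul_assoc orthogonal_matrix matrix_vector_mul_lid)

lemma proj_conj:
  assumes o: "orthogonal_matrix (Q::real^'n^'n)"
    and im: "(\<lambda>x. Q *v x) ` Z = Z'"
    and p: "is_orth_proj R Z'"
  shows "is_orth_proj (matrix_inv Q ** R ** Q) Z"
  unfolding is_orth_proj_def
proof (intro allI conjI ballI)
  fix x
  have e: "matrix_inv Q ** R ** Q *v x = transpose Q *v (R *v (Q *v x))"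
    by (simp add: orth_inv[OF o] matrix_vector_mul_assoc matrix_mul_assoc)
  have "R *v (Q *v x) \<in> Z'" using p unfolding is_orth_proj_def by blast
  then obtain z where z: "z \<in> Z" "R *v (Q *v x) = Q *v z" using im by blast
  show "matrix_inv Q ** R ** Q *v x \<in> Z" using e z orth_back[OF o] by simp
  fix w assume w: "w \<in> Z"
  have "Q *v w \<in> Z'" using im w by blast
  then have "(Q *v x - R *v (Q *v x)) \<bullet> (Q *v w) = 0" using p unfolding is_orth_proj_def by blast
  moreover have "(x - matrix_inv Q ** R ** Q *v x) \<bullet> w = (Q *v x - R *v (Q *v x)) \<bullet> (Q *v w)"
    unfolding e using orth_inner[OF o] tr_inner
    by (simp add: inner_diff_left)
  ultimately show "(x - matrix_inv Q ** R ** Q *v x) \<bullet> w = 0" by simp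
qed

lemma proj_fix:
  assumes s: "subspace Z" and p: "is_orth_proj R Z" and z: "z \<in> Z"
  shows "R *v z = z"
proof -
  have "R *v z \<in> Z" using p unfolding is_orth_proj_def by blast
  then have "z - R *v z \<in> Z" using s z by (simp add: subspace_diff)
  then have "(z - R *v z) \<bullet> (z - R *v z) = 0" using p unfolding is_orth_proj_def by blast
  then show ?thesis by simp
qed

lemma proj_unique:
  assumes s: "subspace Z" and p: "is_orth_proj R Z" and q: "is_orth_proj S Z"
  shows "R = S"
proof -
  have "R *v x = S *v x" for x
  proof -
    have a: "R *v x \<in> Z" "S *v x \<in> Z" using p q unfolding is_orth_proj_def by blast+
    then have d: "R *v x - S *v x \<in> Z" using s by (simp add: subspace_diff)
    have "(x - R *v x) \<bullet> (R *v x - S *v x) = 0" "(x - S *v x) \<bullet> (R *v x - S *v x) = 0"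
      using p q d unfolding is_orth_proj_def by blast+
    then have "(R *v x - S *v x) \<bullet> (R *v x - S *v x) = 0"
      by (simp add: inner_diff_left inner_diff_right inner_commute)
    then show ?thesis by simp
  qed
  then show ?thesis by (simp add: matrix_eq)
qed

theorem lemma5:
  fixes \<theta> P :: "nat \<Rightarrow> real^'n^'n" and Z :: "nat \<Rightarrow> (real^'n) set" and \<alpha> :: "nat \<Rightarrow> real"
  assumes orth: "\<And>t. orthogonal_matrix (\<theta> t)"
    and sub: "\<And>t. subspace (Z t)"
    and img: "\<And>t. (\<lambda>x. \<theta> t *v x) ` Z t = Z (Suc t)"
    and proj: "\<And>t. is_orth_proj (P t) (Z t)"
    and t: "t \<ge> 1"
  shows "Fmat \<theta> P \<alpha> t = (\<Prod>s<t. \<alpha> s) *\<^sub>R mat 1 + (1 - (\<Prod>s<t. \<alpha> s)) *\<^sub>R P 0"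
proof -
  have pc: "s \<le> t \<Longrightarrow> is_orth_proj (Pconj \<theta> P t s) (Z (t - s))" for t s
  proof (induction s)
    case 0 then show ?case using proj by simp
  next
    case (Suc s)
    then have h: "is_orth_proj (Pconj \<theta> P t s) (Z (Suc (t - s - 1)))"
      by (simp add: Suc_diff_Suc)
    show ?case using proj_conj[OF orth img h] by (simp add: diff_diff_add)
  qed
  have pt: "Pconj \<theta> P t t = P 0" for t
    using proj_unique[OF sub[of 0] _ proj[of 0]] pc[of t t] by simp
  have idem: "P 0 *v (P 0 *v x) = P 0 *v x" for x
    using proj_fix[OF sub[of 0] proj[of 0]] proj[of 0] unfolding is_orth_proj_def by blast
  have "Fmat \<theta> P \<alpha> t = (\<Prod>s<t. \<alpha> s) *\<^sub>R mat 1 + (1 - (\<Prod>s<t. \<alpha> s)) *\<^sub>R P 0" for t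
  proof (induction t)
    case 0 then show ?case by simp
  next
    case (Suc t)
    let ?c = "\<Prod>s<t. \<alpha> s"
    have "Gmat \<theta> P \<alpha> t t ** Fmat \<theta> P \<alpha> t *v x =
      ((\<Prod>s<Suc t. \<alpha> s) *\<^sub>R mat 1 + (1 - (\<Prod>s<Suc t. \<alpha> s)) *\<^sub>R P 0) *v x" for x
    proof -
      have "Gmat \<theta> P \<alpha> t t ** Fmat \<theta> P \<alpha> t *v x =
        \<alpha> t *\<^sub>R (?c *\<^sub>R x + (1 - ?c) *\<^sub>R (P 0 *v x)) +
        (1 - \<alpha> t) *\<^sub>R (?c *\<^sub>R (P 0 *v x) + (1 - ?c) *\<^sub>R (P 0 *v (P 0 *v x)))"
        unfolding Suc Gmat_def pt
        by (simp add: matrix_vector_mul_assoc[symmetric] matrix_vector_mult_add_rdistrib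
            scaleR_matrix_vector_assoc[symmetric] matrix_vector_right_distrib matrix_vector_mult_scaleR idem algebra_simps)
      also have "\<dots> = (\<alpha> t * ?c) *\<^sub>R x + (1 - \<alpha> t * ?c) *\<^sub>R (P 0 *v x)"
        unfolding idem by (simp add: algebra_simps)
      finally show ?thesis
        by (simp add: matrix_vector_mult_add_rdistrib scaleR_matrix_vector_assoc[symmetric] mult.commute)
    qed
    then show ?case by (simp add: matrix_eq)
  qed
  then show ?thesis .
qed

end
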